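(* Let $M$ be a constant real $2n\times2n$ symmetric positive definite matrix such that $$\frac{Q+2}{4}\,\langle M\nabla_{\mathbb H}\phi_M,\nabla_{\mathbb H}\phi_M\rangle(x,t)=\phi_M(x,t)\,\mathcal L_M\phi_M(x,t)\quad\text{for all }(x,t)\in\mathbb R^{2n+1}.$$ Then $M$ is symplectic, i.e. $M^{-1}=J^tMJ$.
   Context: Points of $\mathbb R^{2n+1}$ are written $(x,t)$ with $x\in\mathbb R^{2n}$, $t\in\mathbb R$. Let $J=\begin{pmatrix}0&-\mathbb I_n\\ \mathbb I_n&0\end{pmatrix}$ and $Q=2n+2$. The horizontal vector fields are $X_i=\partial_{x_i}+2(Jx)_i\partial_t$, $i=1,\dots,2n$; $\nabla_{\mathbb H}\psi=(X_1\psi,\dots,X_{2n}\psi)$, $D^2_{\mathbb H}\psi=\big(\tfrac12(X_iX_j+X_jX_i)\psi\big)_{i,j}$, and $\mathcal L_M\psi=\mathrm{tr}(MD^2_{\mathbb H}\psi)$. For symmetric positive definite $M$, $\phi_M(x,t)=\langle M^{-1}x,x\rangle^2+t^2$. *)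

theory Defs
  imports "HOL-Analysis.Analysis"
begin

text \<open>Points of R^(2n+1) are pairs (x,t) with x :: real^('n+'n) (the index set of R^(2n)
  is split as two copies of 'n, the first copy giving coordinates 1..n, the second n+1..2n),
  t :: real.\<close>

definition Jmat :: "real^('n::finite + 'n)^('n + 'n)" where
  "Jmat = (\<chi> i j. case (i, j) of
      (Inl a, Inr b) \<Rightarrow> (if a = b then -1 else 0)
    | (Inr a, Inl b) \<Rightarrow> (if a = b then 1 else 0)
    | _ \<Rightarrow> 0)"

definition Qdim :: "'n::finite itself \<Rightarrow> real" where
  "Qdim _ = 2 * real CARD('n) + 2"

definition pdx :: "('n::finite + 'n) \<Rightarrow> (real^('n + 'n) \<Rightarrow> real \<Rightarrow> real) \<Rightarrow> real^('n + 'n) \<Rightarrow> real \<Rightarrow> real" where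
  "pdx i psi x t = deriv (\<lambda>s. psi (x + s *\<^sub>R axis i 1) t) 0"

definition pdt :: "(real^('n::finite + 'n) \<Rightarrow> real \<Rightarrow> real) \<Rightarrow> real^('n + 'n) \<Rightarrow> real \<Rightarrow> real" where
  "pdt psi x t = deriv (\<lambda>s. psi x (t + s)) 0"

definition Xf :: "('n::finite + 'n) \<Rightarrow> (real^('n + 'n) \<Rightarrow> real \<Rightarrow> real) \<Rightarrow> real^('n + 'n) \<Rightarrow> real \<Rightarrow> real" where
  "Xf i psi = (\<lambda>x t. pdx i psi x t + 2 * (Jmat *v x) $ i * pdt psi x t)"

definition hessH :: "('n::finite + 'n) \<Rightarrow> ('n + 'n) \<Rightarrow> (real^('n + 'n) \<Rightarrow> real \<Rightarrow> real) \<Rightarrow> real^('n + 'n) \<Rightarrow> real \<Rightarrow> real" where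
  "hessH i j psi = (\<lambda>x t. (Xf i (Xf j psi) x t + Xf j (Xf i psi) x t) / 2)"

definition LM :: "real^('n::finite + 'n)^('n + 'n) \<Rightarrow> (real^('n + 'n) \<Rightarrow> real \<Rightarrow> real) \<Rightarrow> real^('n + 'n) \<Rightarrow> real \<Rightarrow> real" where
  "LM M psi = (\<lambda>x t. \<Sum>i\<in>UNIV. \<Sum>j\<in>UNIV. M $ i $ j * hessH j i psi x t)"

definition gradM :: "real^('n::finite + 'n)^('n + 'n) \<Rightarrow> (real^('n + 'n) \<Rightarrow> real \<Rightarrow> real) \<Rightarrow> real^('n + 'n) \<Rightarrow> real \<Rightarrow> real" where
  "gradM M psi = (\<lambda>x t. \<Sum>i\<in>UNIV. \<Sum>j\<in>UNIV. M $ i $ j * Xf j psi x t * Xf i psi x t)"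

definition phiM :: "real^('n::finite + 'n)^('n + 'n) \<Rightarrow> real^('n + 'n) \<Rightarrow> real \<Rightarrow> real" where
  "phiM M = (\<lambda>x t. ((matrix_inv M *v x) \<bullet> x)^2 + t^2)"

end

theory Submission imports Defs begin

lemma quad_shift:
  fixes A :: "real^'m^'m"
  shows "(A *v (x + s *\<^sub>R e)) \<bullet> (x + s *\<^sub>R e) =
    (A *v x) \<bullet> x + s * ((A *v e) \<bullet> x + (A *v x) \<bullet> e) + s^2 * ((A *v e) \<bullet> e)"
  by (simp add: matrix_vector_right_distrib matrix_vector_mult_scaleR inner_add_left inner_add_right
      algebra_simps power2_eq_square)

lemma lin_shift:
  fixes A :: "real^'m^'m"
  shows "(A *v (x + s *\<^sub>R e)) $ i = (A *v x) $ i + s * (A *v e) $ i"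
  by (simp add: matrix_vector_right_distrib matrix_vector_mult_scaleR)

lemma deriv1: "deriv (\<lambda>s::real. (a + s*b + s^2*c)^2 + t^2) 0 = 2*a*b"
proof -
  have "((\<lambda>s::real. (a + s*b + s^2*c)^2 + t^2) has_real_derivative
     (2 * (a + 0*b + 0^2*c) * (b + 2*0*c))) (at 0)"
    by (auto intro!: derivative_eq_intros)
  from DERIV_imp_deriv[OF this] show ?thesis by simp
qed

lemma deriv2: "deriv (\<lambda>s::real. c + (t+s)^2) 0 = 2*t"
proof -
  have "((\<lambda>s::real. c + (t+s)^2) has_real_derivative (2*(t+0))) (at 0)"
    by (auto intro!: derivative_eq_intros)
  from DERIV_imp_deriv[OF this] show ?thesis by simp
qed

lemma deriv3: "deriv (\<lambda>s::real. 2*(q + s*b + s^2*c)*(be + s*d) + 2*(k0 + s*k)*(2*t)) 0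
   = 2*(b*be + q*d) + 4*t*k"
proof -
  have "((\<lambda>s::real. 2*(q + s*b + s^2*c)*(be + s*d) + 2*(k0 + s*k)*(2*t)) has_real_derivative
      (2*((b + 2*0*c)*(be+0*d) + (q+0*b+0^2*c)*d) + 2*k*(2*t))) (at 0)"
    by (auto intro!: derivative_eq_intros simp: algebra_simps)
  from DERIV_imp_deriv[OF this] show ?thesis by (simp add: algebra_simps)
qed

lemma deriv4: "deriv (\<lambda>s::real. c + 2*k*(2*(t+s))) 0 = 4*k"
proof -
  have "((\<lambda>s::real. c + 2*k*(2*(t+s))) has_real_derivative (4*k)) (at 0)"
    by (auto intro!: derivative_eq_intros)
  from DERIV_imp_deriv[OF this] show ?thesis by simp
qed

definition bet :: "real^'m^'m \<Rightarrow> 'm \<Rightarrow> real^'m \<Rightarrow> real" where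
  "bet A i x = (A *v axis i 1) \<bullet> x + (A *v x) \<bullet> axis i 1"

lemma Xf_phi:
  fixes A :: "real^('n::finite+'n)^('n+'n)"
  shows "Xf i (\<lambda>x t. ((A *v x) \<bullet> x)^2 + t^2) =
    (\<lambda>x t. 2*((A *v x) \<bullet> x)*bet A i x + 2*(Jmat *v x)$i*(2*t))"
proof (intro ext)
  fix x t
  have 1: "pdx i (\<lambda>x t. ((A *v x) \<bullet> x)^2 + t^2) x t = 2*((A *v x) \<bullet> x)*bet A i x"
    unfolding pdx_def quad_shift bet_def by (rule deriv1)
  have 2: "pdt (\<lambda>x t. ((A *v x) \<bullet> x)^2 + t^2) x t = 2*t"
    unfolding pdt_def by (rule deriv2)
  show "Xf i (\<lambda>x t. ((A *v x) \<bullet> x)^2 + t^2) x t = 2*((A *v x) \<bullet> x)*bet A i x + 2*(Jmat *v x)$i*(2*t)"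
    unfolding Xf_def 1 2 by simp
qed

lemma bet_shift: "bet A i (x + s *\<^sub>R e) = bet A i x + s * ((A *v axis i 1) \<bullet> e + (A *v e) \<bullet> axis i 1)"
  unfolding bet_def by (simp add: matrix_vector_right_distrib matrix_vector_mult_scaleR inner_add_left inner_add_right
      algebra_simps)

lemma XXf_phi:
  fixes A :: "real^('n::finite+'n)^('n+'n)"
  shows "Xf j (Xf i (\<lambda>x t. ((A *v x) \<bullet> x)^2 + t^2)) x t =
    2*(bet A j x * bet A i x + ((A *v x) \<bullet> x) * ((A *v axis i 1) \<bullet> axis j 1 + (A *v axis j 1) \<bullet> axis i 1))
    + 4*t*(Jmat *v axis j 1)$i + 2*(Jmat *v x)$j*(4*(Jmat *v x)$i)"
proof -
  have 1: "pdx j (\<lambda>x t. 2*((A *v x) \<bullet> x)*bet A i x + 2*(Jmat *v x)$i*(2*t)) x t =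
     2*(bet A j x * bet A i x + ((A *v x) \<bullet> x) * ((A *v axis i 1) \<bullet> axis j 1 + (A *v axis j 1) \<bullet> axis i 1))
    + 4*t*(Jmat *v axis j 1)$i"
    unfolding pdx_def quad_shift bet_shift lin_shift
    by (subst deriv3) (simp add: bet_def)
  have 2: "pdt (\<lambda>x t. 2*((A *v x) \<bullet> x)*bet A i x + 2*(Jmat *v x)$i*(2*t)) x t = 4*(Jmat *v x)$i"
    unfolding pdt_def by (rule deriv4)
  show ?thesis unfolding Xf_phi unfolding Xf_def 1 2 by simp
qed


lemma sum_affine:
  fixes M :: "real^'m^'m"
  assumes "\<And>i j. f i j t = f i j 0 + t * (f i j 1 - f i j 0)"
  shows "(\<Sum>i\<in>UNIV. \<Sum>j\<in>UNIV. M$i$j * f i j t) =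
     (\<Sum>i\<in>UNIV. \<Sum>j\<in>UNIV. M$i$j * f i j 0) + t * ((\<Sum>i\<in>UNIV. \<Sum>j\<in>UNIV. M$i$j * f i j 1) - (\<Sum>i\<in>UNIV. \<Sum>j\<in>UNIV. M$i$j * f i j 0))"
  apply (subst assms)
  by (simp add: sum.distrib sum_distrib_left sum_subtractf algebra_simps)

lemma sum_quad:
  fixes M :: "real^'m^'m"
  shows "(\<Sum>i\<in>UNIV. \<Sum>j\<in>UNIV. M$i$j * (P j + t*R j) * (P i + t * R i)) =
     (\<Sum>i\<in>UNIV. \<Sum>j\<in>UNIV. M$i$j * P j * P i) + t * (\<Sum>i\<in>UNIV. \<Sum>j\<in>UNIV. M$i$j * (P j * R i + R j * P i))
     + t^2 * (\<Sum>i\<in>UNIV. \<Sum>j\<in>UNIV. M$i$j * R j * R i)"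
  by (simp add: sum.distrib sum_distrib_left algebra_simps power2_eq_square)

lemma sumform:
  fixes M :: "real^'m^'m"
  shows "(\<Sum>i\<in>UNIV. \<Sum>j\<in>UNIV. M$i$j * y$j * z$i) = z \<bullet> (M *v y)"
  by (simp add: inner_vec_def matrix_vector_mult_def sum_distrib_left algebra_simps)

lemma polar:
  fixes B C :: "real^'m^'m"
  assumes "transpose B = B" "transpose C = C" "\<And>x. x \<bullet> (B *v x) = x \<bullet> (C *v x)"
  shows "B = C"
proof -
  define D where "D = B - C"
  have tD: "transpose D = D" using assms by (simp add: D_def transpose_def vec_eq_iff)
  have q: "x \<bullet> (D *v x) = 0" for x using assms(3)[of x]
    by (simp add: D_def matrix_vector_mult_diff_rdistrib inner_diff_right)
  have e: "axis i 1 \<bullet> (D *v axis j 1) = D$i$j" for i j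
    by (simp add: matrix_vector_mult_basis column_def inner_commute[of "axis i 1"] inner_axis)
  have sym: "D$i$j = D$j$i" for i j using tD by (metis transpose_def vec_lambda_beta)
  have "D$i$j = 0" for i j
  proof -
    have "(axis i 1 + axis j 1) \<bullet> (D *v (axis i 1 + axis j 1)) = 0" by (rule q)
    hence "D$i$i + D$i$j + D$j$i + D$j$j = 0"
      by (simp add: matrix_vector_right_distrib inner_add_left inner_add_right e)
    moreover have "D$i$i = 0" "D$j$j = 0" using q[of "axis i 1"] q[of "axis j 1"] e by auto
    ultimately show ?thesis using sym[of i j] by simp
  qed
  hence "D = 0" by (simp add: vec_eq_iff)
  thus ?thesis by (simp add: D_def)
qed


theorem lemma3p2:
  fixes M :: "real^('n::finite + 'n)^('n + 'n)"
  assumes symm: "transpose M = M"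
    and posdef: "\<forall>v. v \<noteq> 0 \<longrightarrow> v \<bullet> (M *v v) > 0"
    and eq: "\<forall>x t. (Qdim TYPE('n) + 2) / 4 * gradM M (phiM M) x t
                    = phiM M x t * LM M (phiM M) x t"
  shows "matrix_inv M = transpose Jmat ** M ** Jmat"
proof -
  define A where "A = matrix_inv M"
  have ker: "\<forall>x. M *v x = 0 \<longrightarrow> x = 0"
    using posdef by (metis inner_zero_right less_irrefl)
  hence "invertible M" using invertible_left_inverse matrix_left_invertible_ker by blast
  hence "\<exists>A'. M ** A' = mat 1 \<and> A' ** M = mat 1" unfolding invertible_def .
  hence inv: "M ** A = mat 1" "A ** M = mat 1" unfolding A_def matrix_inv_def
    by (metis (mono_tags, lifting) someI_ex)+
  have tA: "transpose A = A"
  proof -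
    have "transpose A ** M = mat 1" using inv(1) symm
      by (metis matrix_transpose_mul transpose_mat)
    hence "transpose A = transpose A ** (M ** A)" using inv by (simp add: matrix_mul_rid)
    also have "\<dots> = A" using \<open>transpose A ** M = mat 1\<close>
      by (simp add: matrix_mul_assoc matrix_mul_lid)
    finally show ?thesis .
  qed
  have Asym: "A$i$j = A$j$i" for i j
  proof -
    have "transpose A $ j $ i = A $ j $ i" using tA by simp
    thus ?thesis by (simp add: transpose_def)
  qed
  have phi: "phiM M = (\<lambda>x t. ((A *v x) \<bullet> x)^2 + t^2)" unfolding phiM_def A_def ..
  define c where "c = (Qdim TYPE('n) + 2) / 4"
  have cpos: "c > 0" unfolding c_def Qdim_def by simp
  have betA: "bet A i x = 2 * (A *v x) $ i" for i x
  proof -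
    have "(A *v axis i 1) \<bullet> x = (A *v x) $ i"
      unfolding matrix_vector_mult_basis
      by (simp add: column_def inner_vec_def matrix_vector_mult_def Asym mult.commute)
    thus ?thesis unfolding bet_def by (simp add: inner_axis)
  qed
  have key: "(A *v x) \<bullet> x = x \<bullet> ((transpose Jmat ** M ** Jmat) *v x)" for x
  proof (cases "x = 0")
    case True thus ?thesis by simp
  next
    case False
    define q where "q = (A *v x) \<bullet> x"
    have MAx: "M *v (A *v x) = x" using inv by (simp add: matrix_vector_mul_assoc)
    have "A *v x \<noteq> 0" using MAx False by auto
    hence qpos: "q > 0" using posdef MAx unfolding q_def by (metis inner_commute)
    define P where "P i = 2 * q * bet A i x" for i
    define R where "R i = 4 * (Jmat *v x) $ i" for i
    have Xfe: "Xf i (phiM M) x t = P i + t * R i" for i t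
      unfolding phi Xf_phi P_def R_def q_def by simp
    define G0 where "G0 = (\<Sum>i\<in>UNIV. \<Sum>j\<in>UNIV. M$i$j * P j * P i)"
    define G1 where "G1 = (\<Sum>i\<in>UNIV. \<Sum>j\<in>UNIV. M$i$j * (P j * R i + R j * P i))"
    define G2 where "G2 = (\<Sum>i\<in>UNIV. \<Sum>j\<in>UNIV. M$i$j * R j * R i)"
    have grad: "gradM M (phiM M) x t = G0 + t * G1 + t^2 * G2" for t
      unfolding gradM_def Xfe G0_def G1_def G2_def by (rule sum_quad)
    define h where "h i j t = hessH j i (phiM M) x t" for i j t
    have haff: "h i j t = h i j 0 + t * (h i j 1 - h i j 0)" for i j t
      unfolding h_def hessH_def phi XXf_phi by (simp add: field_simps)
    define L0 where "L0 = LM M (phiM M) x 0"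
    define L1 where "L1 = LM M (phiM M) x 1 - LM M (phiM M) x 0"
    have lm: "LM M (phiM M) x t = L0 + t * L1" for t
      unfolding L0_def L1_def LM_def using sum_affine[of h t M, OF haff]
      by (simp add: h_def)
    have ph: "phiM M x t = q^2 + t^2" for t unfolding phi q_def ..
    have e: "c * (G0 + t * G1 + t^2 * G2) = (q^2 + t^2) * (L0 + t * L1)" for t
      using eq[rule_format, of x t] unfolding grad lm ph c_def by simp
    have e0: "c * G0 = q^2 * L0" using e[of 0] by simp
    have e1: "c * (G0 + G1 + G2) = (q^2 + 1) * (L0 + L1)" using e[of 1] by simp
    have e2: "c * (G0 - G1 + G2) = (q^2 + 1) * (L0 - L1)" using e[of "-1"] by simp
    have "c * G2 = L0" using e0 e1 e2 by (simp add: algebra_simps)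
    hence "c * G0 = c * (q^2 * G2)" using e0 by (simp add: algebra_simps)
    hence G02: "G0 = q^2 * G2" using cpos by simp
    have "G0 = 16 * q^2 * (\<Sum>i\<in>UNIV. \<Sum>j\<in>UNIV. M$i$j * (A *v x)$j * (A *v x)$i)"
      unfolding G0_def P_def betA by (simp add: sum_distrib_left algebra_simps power2_eq_square)
    also have "\<dots> = 16 * q^3" unfolding sumform MAx q_def
      by (simp add: inner_commute power3_eq_cube power2_eq_square)
    finally have G0v: "G0 = 16 * q^3" .
    have "G2 = 16 * (\<Sum>i\<in>UNIV. \<Sum>j\<in>UNIV. M$i$j * (Jmat *v x)$j * (Jmat *v x)$i)"
      unfolding G2_def R_def by (simp add: sum_distrib_left algebra_simps)
    also have "\<dots> = 16 * ((Jmat *v x) \<bullet> (M *v (Jmat *v x)))" unfolding sumform ..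
    also have "(Jmat *v x) \<bullet> (M *v (Jmat *v x)) = x \<bullet> ((transpose Jmat ** M ** Jmat) *v x)"
      by (metis dot_lmul_matrix vector_transpose_matrix matrix_vector_mul_assoc)
    finally have G2v: "G2 = 16 * (x \<bullet> ((transpose Jmat ** M ** Jmat) *v x))" .
    have "q^2 * q = q^2 * (x \<bullet> ((transpose Jmat ** M ** Jmat) *v x))"
      using G02 G0v G2v by (simp add: power3_eq_cube power2_eq_square)
    hence "q = x \<bullet> ((transpose Jmat ** M ** Jmat) *v x)" using qpos by simp
    thus ?thesis unfolding q_def .
  qed
  have "A = transpose Jmat ** M ** Jmat"
  proof (rule polar[OF tA])
    show "transpose (transpose Jmat ** M ** Jmat) = transpose Jmat ** M ** Jmat"
      using symm by (simp add: matrix_transpose_mul matrix_mul_assoc)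
    show "x \<bullet> (A *v x) = x \<bullet> ((transpose Jmat ** M ** Jmat) *v x)" for x
      using key[of x] by (simp add: inner_commute)
  qed
  thus ?thesis unfolding A_def .
qed

end
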